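(* If $F \dashv G$ is a transparent Galois connection for $p$, then for every finite $L \subseteq \mathcal{L}$, $|C_{F\dashv G}(L)| \ge |k_p^*(C(L))|$.
   Context: $\mathcal{L}$ is a join semi-lattice with least element $\bot$ that also has greatest lower bounds (meets). Programs $p$ are partial functions from $\mathcal{P}(I \times \mathcal{L})$ to $\mathcal{P}(O \times \mathcal{L})$; $\mathcal{L}(x) = \{\ell \mid a^\ell \in x\}$ is the set of labels in $x$. For finite $S \subseteq \mathcal{L}$, $C(S) = \{\bigsqcup S' \mid S' \subseteq S\}$ is the closure set. A Galois connection $F \dashv G$ between $\mathcal{L}$ and a lattice $\mathcal{L}'$ is a pair $F : \mathcal{L} \to \mathcal{L}'$, $G : \mathcal{L}' \to \mathcal{L}$ with $F(\ell) \sqsubseteq \jmath \iff \ell \sqsubseteq G(\jmath)$. For a function $h$ and set $S$, $h^*(S) = \{h(s) \mid s \in S\}$, and $C_{F\dashv G}(S) = G^*(C(F^*(S)))$. $F \dashv G$ is transparent for $p$ if $\mathcal{L}(p(x)) \subseteq (G\circ F)^*(\mathcal{L})$ for all $x$. $k_p(\ell)$ is the greatest lower bound (meet) of $\{\jmath \mid \exists x.\ \jmath \in \mathcal{L}(p(x)) \wedge \ell \sqsubseteq \jmath\}$. *)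

theory Defs
  imports Main
begin

definition fjoin :: "'a::bounded_semilattice_sup_bot set \<Rightarrow> 'a" where
  "fjoin S = Finite_Set.fold sup bot S"

definition closure_set :: "'a::bounded_semilattice_sup_bot set \<Rightarrow> 'a set" where
  "closure_set S = {fjoin S' | S'. S' \<subseteq> S}"

definition labels :: "('v \<times> 'l) set \<Rightarrow> 'l set" where
  "labels x = {l. \<exists>a. (a, l) \<in> x}"

definition galois_conn :: "('a::order \<Rightarrow> 'b::order) \<Rightarrow> ('b \<Rightarrow> 'a) \<Rightarrow> bool" where
  "galois_conn F G \<longleftrightarrow> (\<forall>l j. F l \<le> j \<longleftrightarrow> l \<le> G j)"

definition closure_gc ::
  "('a::bounded_semilattice_sup_bot \<Rightarrow> 'b::bounded_semilattice_sup_bot) \<Rightarrow> ('b \<Rightarrow> 'a) \<Rightarrow> 'a set \<Rightarrow> 'a set" where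
  "closure_gc F G S = G ` closure_set (F ` S)"

text \<open>Programs are partial functions, modelled with option.
  Transparency of F -| G for p.\<close>
definition transparent ::
  "('a \<Rightarrow> 'b) \<Rightarrow> ('b \<Rightarrow> 'a) \<Rightarrow> (('i \<times> 'a) set \<Rightarrow> ('o \<times> 'a) set option) \<Rightarrow> bool" where
  "transparent F G p \<longleftrightarrow> (\<forall>x y. p x = Some y \<longrightarrow> labels y \<subseteq> (G \<circ> F) ` UNIV)"

definition kp :: "(('i \<times> 'a) set \<Rightarrow> ('o \<times> 'a) set option) \<Rightarrow> 'a::complete_lattice \<Rightarrow> 'a" where
  "kp p l = Inf {j. \<exists>x y. p x = Some y \<and> j \<in> labels y \<and> l \<le> j}"

end

theory Submission
  imports Defs
begin

lemma fjoin_empty: "fjoin {} = bot"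
  by (simp add: fjoin_def)

lemma fjoin_insert: "finite S \<Longrightarrow> fjoin (insert (x::'a::bounded_semilattice_sup_bot) S) = sup x (fjoin S)"
proof -
  assume "finite S"
  interpret comp_fun_idem "sup :: 'a \<Rightarrow> 'a \<Rightarrow> 'a" by (rule comp_fun_idem_sup)
  show ?thesis using \<open>finite S\<close> by (simp add: fjoin_def fold_insert_idem)
qed

lemma gc_bot:
  assumes "galois_conn F G"
  shows "F (bot::'a::bounded_semilattice_sup_bot) = (bot::'b::bounded_semilattice_sup_bot)"
proof -
  have "F bot \<le> bot" using assms unfolding galois_conn_def by simp
  then show ?thesis by (simp add: order.antisym)
qed

lemma gc_sup:
  assumes "galois_conn F G"
  shows "F (sup (a::'a::bounded_semilattice_sup_bot) b) = sup (F a) (F b :: 'b::bounded_semilattice_sup_bot)"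
proof (rule order.antisym)
  have gc: "\<And>l j. F l \<le> j \<longleftrightarrow> l \<le> G j" using assms unfolding galois_conn_def by blast
  have "a \<le> G (sup (F a) (F b))" by (metis gc sup_ge1)
  moreover have "b \<le> G (sup (F a) (F b))" by (metis gc sup_ge2)
  ultimately show "F (sup a b) \<le> sup (F a) (F b)" using gc by simp
  have mono: "\<And>x y. x \<le> y \<Longrightarrow> F x \<le> F y"
  proof -
    fix x y :: 'a assume "x \<le> y"
    moreover have "y \<le> G (F y)" by (metis gc order.refl)
    ultimately have "x \<le> G (F y)" by (rule order.trans)
    then show "F x \<le> F y" using gc by simp
  qed
  show "sup (F a) (F b) \<le> F (sup a b)" using mono by simp
qed

lemma gc_fjoin:
  assumes "galois_conn F G" and "finite S"
  shows "F (fjoin (S::'a::bounded_semilattice_sup_bot set)) = (fjoin (F ` S) :: 'b::bounded_semilattice_sup_bot)"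
  using assms(2)
proof (induction S rule: finite_induct)
  case empty
  then show ?case using gc_bot[OF assms(1)] by (simp add: fjoin_empty)
next
  case (insert x S)
  then show ?case using gc_sup[OF assms(1)] by (simp add: fjoin_insert)
qed

theorem mainTheorem12:
  fixes F :: "'a::complete_lattice \<Rightarrow> 'b::bounded_lattice_bot"
    and G :: "'b \<Rightarrow> 'a"
    and p :: "('i \<times> 'a) set \<Rightarrow> ('o \<times> 'a) set option"
    and L :: "'a set"
  assumes "galois_conn F G"
    and "transparent F G p"
    and "finite L"
  shows "card (closure_gc F G L) \<ge> card (kp p ` closure_set L)"
proof -
  have gc: "\<And>l j. F l \<le> j \<longleftrightarrow> l \<le> G j" using assms(1) unfolding galois_conn_def by blast
  have closed: "\<And>s m. s \<le> G (F m) \<longleftrightarrow> G (F s) \<le> G (F m)"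
  proof -
    fix s m
    have "\<And>t. t \<le> G (F t)" by (metis gc order.refl)
    have "s \<le> G (F m) \<longleftrightarrow> F s \<le> F m" using gc by simp
    also have "\<dots> \<longleftrightarrow> G (F s) \<le> G (F m)"
      by (metis gc order.refl order.trans)
    finally show "s \<le> G (F m) \<longleftrightarrow> G (F s) \<le> G (F m)" .
  qed
  have kpeq: "kp p s = kp p (G (F s))" for s
  proof -
    have "{j. \<exists>x y. p x = Some y \<and> j \<in> labels y \<and> s \<le> j}
        = {j. \<exists>x y. p x = Some y \<and> j \<in> labels y \<and> G (F s) \<le> j}"
    proof (intro Collect_cong iffI)
      fix j
      assume "\<exists>x y. p x = Some y \<and> j \<in> labels y \<and> s \<le> j"
      then obtain x y where h: "p x = Some y" "j \<in> labels y" "s \<le> j" by blast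
      then obtain m where "j = G (F m)" using assms(2) unfolding transparent_def by force
      then show "\<exists>x y. p x = Some y \<and> j \<in> labels y \<and> G (F s) \<le> j" using h closed by blast
    next
      fix j
      assume "\<exists>x y. p x = Some y \<and> j \<in> labels y \<and> G (F s) \<le> j"
      then obtain x y where h: "p x = Some y" "j \<in> labels y" "G (F s) \<le> j" by blast
      then obtain m where "j = G (F m)" using assms(2) unfolding transparent_def by force
      then show "\<exists>x y. p x = Some y \<and> j \<in> labels y \<and> s \<le> j" using h closed by blast
    qed
    then show ?thesis unfolding kp_def by simp
  qed
  have sub: "kp p ` closure_set L \<subseteq> kp p ` closure_gc F G L"
  proof
    fix k assume "k \<in> kp p ` closure_set L"
    then obtain S' where S': "S' \<subseteq> L" "k = kp p (fjoin S')" unfolding closure_set_def by blast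
    have fin: "finite S'" using S'(1) assms(3) finite_subset by blast
    have "G (F (fjoin S')) = G (fjoin (F ` S'))" using gc_fjoin[OF assms(1) fin] by simp
    moreover have "fjoin (F ` S') \<in> closure_set (F ` L)" unfolding closure_set_def using S'(1) by blast
    ultimately have "G (F (fjoin S')) \<in> closure_gc F G L" unfolding closure_gc_def by simp
    then show "k \<in> kp p ` closure_gc F G L" using S'(2) kpeq by blast
  qed
  have finC: "finite (closure_set (F ` L))"
  proof -
    have "closure_set (F ` L) = fjoin ` Pow (F ` L)" unfolding closure_set_def by blast
    then show ?thesis using assms(3) by simp
  qed
  have fin: "finite (closure_gc F G L)" unfolding closure_gc_def using finC by simp
  have "card (kp p ` closure_set L) \<le> card (kp p ` closure_gc F G L)"
    using card_mono[OF finite_imageI[OF fin] sub] .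
  also have "\<dots> \<le> card (closure_gc F G L)" by (rule card_image_le[OF fin])
  finally show ?thesis .
qed

end
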